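(* Let $m\ge0$, let $f:\mathbb{R}^n\to\mathbb{R}$ be $m$-weakly convex, and consider one call of the subroutine ProxDescent$(x_k,\beta,\rho)$ (defined in the context) with $\beta\in(0,1)$, $\rho>0$, $\alpha=m+\rho$. Let $\Delta_k:=f(x_k)-f_\alpha(x_k)$ and assume $\Delta_k>0$. Then the while-loop terminates after finitely many steps, and the number $T_k$ of trial points computed satisfies $$T_k\le\frac{8G_k^2}{(1-\beta)^2\rho\,\Delta_k},\qquad\text{where } G_k=\max_{1\le j\le T_k}\|g_j\|.$$
   Context: A function $f$ is $m$-weakly convex ($m\ge 0$) if $x\mapsto f(x)+\frac{m}{2}\|x\|^2$ is convex; its subdifferential is $\partial f(x)=\{v: f(y)\ge f(x)+\langle v,y-x\rangle-\frac{m}{2}\|y-x\|^2\ \forall y\}$. For $\alpha>m$, $f_\alpha(x)=\inf_y\{f(y)+\frac\alpha2\|y-x\|^2\}$ (Moreau envelope). Subroutine ProxDescent$(x_k,\beta,\rho)$: set $j=1$, choose $g_1\in\partial f(x_k)$, let $\tilde f_1(x)=f(x_k)+\langle g_1,x-x_k\rangle$, and compute $z_2=\arg\min_x\{\tilde f_1(x)+\frac\rho2\|x-x_k\|^2\}$. While $f(x_k)-\big(f(z_{j+1})+\frac m2\|z_{j+1}-x_k\|^2\big)<\beta\big(f(x_k)-\tilde f_j(z_{j+1})\big)$: choose $g_{j+1}$ with $g_{j+1}-m(z_{j+1}-x_k)\in\partial f(z_{j+1})$ and a convex $\tilde f_{j+1}:\mathbb{R}^n\to\mathbb{R}$ such that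 for all $x$: (i) $\tilde f_{j+1}(x)\le f(x)+\frac m2\|x-x_k\|^2$; (ii) $\tilde f_{j+1}(x)\ge\tilde f_j(z_{j+1})+\langle s_{j+1},x-z_{j+1}\rangle$ with $s_{j+1}=\rho(x_k-z_{j+1})$; (iii) $\tilde f_{j+1}(x)\ge f(z_{j+1})+\frac m2\|z_{j+1}-x_k\|^2+\langle g_{j+1},x-z_{j+1}\rangle$; compute $z_{j+2}=\arg\min_x\{\tilde f_{j+1}(x)+\frac\rho2\|x-x_k\|^2\}$ and increase $j$ by one. On exit, return $z_{j+1}$. $T_k$ denotes the number of trial points $z_2,\dots,z_{T_k+1}$ computed in the call (equivalently the number of vectors $g_1,\dots,g_{T_k}$ used). *)

theory Defs
  imports "HOL-Analysis.Analysis"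
begin

definition weakly_convex :: "real \<Rightarrow> ('a::real_inner \<Rightarrow> real) \<Rightarrow> bool" where
  "weakly_convex m f \<longleftrightarrow> m \<ge> 0 \<and> convex_on UNIV (\<lambda>x. f x + m / 2 * (norm x)\<^sup>2)"

definition wsubdiff :: "real \<Rightarrow> ('a::real_inner \<Rightarrow> real) \<Rightarrow> 'a \<Rightarrow> 'a set" where
  "wsubdiff m f x = {v. \<forall>y. f y \<ge> f x + inner v (y - x) - m / 2 * (norm (y - x))\<^sup>2}"

definition moreau_env :: "('a::real_normed_vector \<Rightarrow> real) \<Rightarrow> real \<Rightarrow> 'a \<Rightarrow> real" where
  "moreau_env f \<alpha> x = (INF y. f y + \<alpha> / 2 * (norm (y - x))\<^sup>2)"

definition is_prox_min :: "('a::real_normed_vector \<Rightarrow> real) \<Rightarrow> real \<Rightarrow> 'a \<Rightarrow> 'a \<Rightarrow> bool" where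
  "is_prox_min h \<rho> xk z \<longleftrightarrow>
     (\<forall>x. h z + \<rho> / 2 * (norm (z - xk))\<^sup>2 \<le> h x + \<rho> / 2 * (norm (x - xk))\<^sup>2)"

definition pd_continue ::
  "('a::real_normed_vector \<Rightarrow> real) \<Rightarrow> real \<Rightarrow> real \<Rightarrow> 'a \<Rightarrow> (nat \<Rightarrow> 'a \<Rightarrow> real) \<Rightarrow> (nat \<Rightarrow> 'a) \<Rightarrow> nat \<Rightarrow> bool" where
  "pd_continue f m \<beta> xk tf z j \<longleftrightarrow>
     f xk - (f (z (j+1)) + m / 2 * (norm (z (j+1) - xk))\<^sup>2) < \<beta> * (f xk - tf j (z (j+1)))"

text \<open>A run of ProxDescent(xk, beta, rho): sequences g_j, tilde f_j, z_j (indices from 1 resp. 2)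
  obeying the rules of the subroutine at every step that is actually executed.\<close>
definition prox_descent_run ::
  "('a::real_inner \<Rightarrow> real) \<Rightarrow> real \<Rightarrow> 'a \<Rightarrow> real \<Rightarrow> real \<Rightarrow>
   (nat \<Rightarrow> 'a) \<Rightarrow> (nat \<Rightarrow> 'a \<Rightarrow> real) \<Rightarrow> (nat \<Rightarrow> 'a) \<Rightarrow> bool" where
  "prox_descent_run f m xk \<beta> \<rho> g tf z \<longleftrightarrow>
     g 1 \<in> wsubdiff m f xk \<and>
     tf 1 = (\<lambda>x. f xk + inner (g 1) (x - xk)) \<and>
     is_prox_min (tf 1) \<rho> xk (z 2) \<and>
     (\<forall>j\<ge>1. (\<forall>i\<in>{1..j}. pd_continue f m \<beta> xk tf z i) \<longrightarrow>
        g (j+1) - m *\<^sub>R (z (j+1) - xk) \<in> wsubdiff m f (z (j+1)) \<and>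
        convex_on UNIV (tf (j+1)) \<and>
        (\<forall>x. tf (j+1) x \<le> f x + m / 2 * (norm (x - xk))\<^sup>2) \<and>
        (\<forall>x. tf (j+1) x \<ge> tf j (z (j+1)) + inner (\<rho> *\<^sub>R (xk - z (j+1))) (x - z (j+1))) \<and>
        (\<forall>x. tf (j+1) x \<ge> f (z (j+1)) + m / 2 * (norm (z (j+1) - xk))\<^sup>2
                           + inner (g (j+1)) (x - z (j+1))) \<and>
        is_prox_min (tf (j+1)) \<rho> xk (z (j+2)))"

end

theory Submission
  imports Defs
begin

lemma nsq: "(norm (x - y))\<^sup>2 = (norm (x - w))\<^sup>2 + 2 * inner (x - w) (w - y) + (norm (w - y))\<^sup>2"
  for x y w :: "'a::real_inner"
proof -
  have e: "x - y = (x - w) + (w - y)" by simp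
  have "inner ((x - w) + (w - y)) ((x - w) + (w - y)) = inner (x - w) (x - w) + 2 * inner (x - w) (w - y) + inner (w - y) (w - y)"
    by (simp only: inner_add_left inner_add_right inner_commute[of "w-y" "x-w"])
  then show ?thesis unfolding power2_norm_eq_inner e .
qed

lemma progress_real:
  fixes a d G e gn wn \<rho> \<beta> P t :: real
  assumes "\<rho> > 0" "0 < \<beta>" "\<beta> < 1" "G > 0" "a \<ge> 0" "a \<le> G\<^sup>2 / (2*\<rho>)" "gn \<le> G" "0 \<le> gn" "d \<ge> 0"
    "wn \<le> gn + \<rho> * d" "wn \<ge> 0" "e \<ge> (1-\<beta>) * (a + \<rho>/2 * d\<^sup>2)" "t \<ge> 0"
    "\<And>l. 0 \<le> l \<Longrightarrow> l \<le> 1 \<Longrightarrow> P \<ge> l * e + \<rho>/2 * t\<^sup>2 - l * wn * t"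
  shows "P \<ge> (1-\<beta>)\<^sup>2 * \<rho> * a\<^sup>2 / (8 * G\<^sup>2)"
proof -
  define l where "l = (1-\<beta>) * a * \<rho> / (4 * G\<^sup>2)"
  have l0: "0 \<le> l" using assms unfolding l_def by auto
  have "l \<le> (1-\<beta>) * (G\<^sup>2 / (2*\<rho>)) * \<rho> / (4 * G\<^sup>2)"
    unfolding l_def using assms by (intro divide_right_mono mult_right_mono mult_left_mono) auto
  also have "\<dots> = (1-\<beta>)/8" using assms by (simp add: field_simps)
  finally have l1: "l \<le> (1-\<beta>)/8" .
  have P1: "P \<ge> l * e + \<rho>/2 * t\<^sup>2 - l * wn * t" using assms(14)[OF l0] l1 assms by auto
  have q: "\<rho>/2 * t\<^sup>2 - l * wn * t \<ge> - l\<^sup>2 * wn\<^sup>2 / (2*\<rho>)"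
  proof -
    have "0 \<le> (\<rho> * t - l * wn)\<^sup>2 / (2*\<rho>)" using assms by auto
    also have "\<dots> = \<rho>/2 * t\<^sup>2 - l * wn * t + l\<^sup>2 * wn\<^sup>2 / (2*\<rho>)"
      using assms by (simp add: field_simps power2_eq_square)
    finally show ?thesis by linarith
  qed
  have w2: "wn\<^sup>2 \<le> 2 * G\<^sup>2 + 2 * \<rho>\<^sup>2 * d\<^sup>2"
  proof -
    have "wn\<^sup>2 \<le> (gn + \<rho> * d)\<^sup>2" using assms by (intro power_mono) auto
    also have "\<dots> \<le> 2 * gn\<^sup>2 + 2 * (\<rho> * d)\<^sup>2"
      using sum_squares_ge_zero[of "gn - \<rho>*d" 0] by (simp add: power2_eq_square algebra_simps)
    also have "\<dots> \<le> 2 * G\<^sup>2 + 2 * \<rho>\<^sup>2 * d\<^sup>2"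
      using assms by (simp add: power_mono power_mult_distrib)
    finally show ?thesis .
  qed
  have "P \<ge> l * e - l\<^sup>2 * wn\<^sup>2 / (2*\<rho>)" using P1 q by linarith
  moreover have "l * e \<ge> l * ((1-\<beta>) * (a + \<rho>/2 * d\<^sup>2))" using l0 assms by (intro mult_left_mono) auto
  moreover have "l\<^sup>2 * wn\<^sup>2 / (2*\<rho>) \<le> l\<^sup>2 * (2 * G\<^sup>2 + 2 * \<rho>\<^sup>2 * d\<^sup>2) / (2*\<rho>)"
    using w2 assms by (intro divide_right_mono mult_left_mono) auto
  ultimately have P2: "P \<ge> l * ((1-\<beta>) * (a + \<rho>/2 * d\<^sup>2)) - l\<^sup>2 * (2 * G\<^sup>2 + 2 * \<rho>\<^sup>2 * d\<^sup>2) / (2*\<rho>)"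
    by linarith
  have eq: "l * ((1-\<beta>) * (a + \<rho>/2 * d\<^sup>2)) - l\<^sup>2 * (2 * G\<^sup>2 + 2 * \<rho>\<^sup>2 * d\<^sup>2) / (2*\<rho>)
     = (l * (1-\<beta>) * a - l\<^sup>2 * G\<^sup>2 / \<rho>) + l * \<rho> * d\<^sup>2 * ((1-\<beta>)/2 - l)"
    using assms by (simp add: field_simps power2_eq_square)
  have t2: "l * \<rho> * d\<^sup>2 * ((1-\<beta>)/2 - l) \<ge> 0" using l0 l1 assms by auto
  have t1: "l * (1-\<beta>) * a - l\<^sup>2 * G\<^sup>2 / \<rho> = 3 * ((1-\<beta>)\<^sup>2 * \<rho> * a\<^sup>2 / (16 * G\<^sup>2))"
    unfolding l_def using assms by (simp add: field_simps power2_eq_square)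
  have "(1-\<beta>)\<^sup>2 * \<rho> * a\<^sup>2 / (16 * G\<^sup>2) \<ge> 0" using assms by auto
  moreover have "(1-\<beta>)\<^sup>2 * \<rho> * a\<^sup>2 / (8 * G\<^sup>2) = 2 * ((1-\<beta>)\<^sup>2 * \<rho> * a\<^sup>2 / (16 * G\<^sup>2))"
    by simp
  ultimately show ?thesis using P2 eq t1 t2 by linarith
qed

lemma recip_step:
  fixes a b c :: real
  assumes "b > 0" "a > 0" "c \<ge> 0" "c * a < 1" "b \<le> a - c * a\<^sup>2"
  shows "1/b \<ge> 1/a + c"
proof -
  have "b * (1/a + c) \<le> (a - c*a\<^sup>2) * (1/a + c)" using assms
    by (intro mult_right_mono) auto
  also have "\<dots> = 1 - (c*a)\<^sup>2" using assms by (simp add: field_simps power2_eq_square)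
  also have "\<dots> \<le> 1" by simp
  finally have "b * (1/a + c) \<le> 1" .
  then show ?thesis using assms by (simp add: field_simps)
qed


lemma final_real:
  fixes T \<beta> \<rho> G D :: real
  assumes "0 < \<beta>" "\<beta> < 1" "\<rho> > 0" "G > 0" "D > 0"
    "(T - 1) * ((1-\<beta>)\<^sup>2 * \<rho> / (8 * G\<^sup>2)) \<le> 1 / D - 2 * \<rho> / G\<^sup>2"
  shows "T \<le> 8 * G\<^sup>2 / ((1-\<beta>)\<^sup>2 * \<rho> * D)"
proof -
  define q where "q = (1-\<beta>)\<^sup>2"
  have q0: "q > 0" using assms unfolding q_def by auto
  have q1: "q \<le> 1" using assms unfolding q_def by (simp add: power_le_one)
  define K where "K = 8 * G\<^sup>2 / (q * \<rho>)"
  have K0: "K > 0" using q0 assms unfolding K_def by auto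
  have "(T - 1) * ((1-\<beta>)\<^sup>2 * \<rho> / (8 * G\<^sup>2)) * K \<le> (1 / D - 2 * \<rho> / G\<^sup>2) * K"
    using assms(6) K0 by (intro mult_right_mono) auto
  moreover have "(T - 1) * ((1-\<beta>)\<^sup>2 * \<rho> / (8 * G\<^sup>2)) * K = T - 1"
    unfolding K_def q_def using assms q0[unfolded q_def] by (simp add: field_simps)
  moreover have "(1 / D - 2 * \<rho> / G\<^sup>2) * K = 8 * G\<^sup>2 / (q * \<rho> * D) - 16 / q"
    unfolding K_def using assms q0 by (simp add: field_simps)
  moreover have "16 / q \<ge> 1" using q0 q1 by (simp add: field_simps)
  ultimately show ?thesis unfolding q_def by linarith
qed

lemma ok_mono: "(\<forall>i\<in>{1..Suc j}. P i) \<Longrightarrow> (\<forall>i\<in>{1..j}. P i)" by auto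

theorem mainTheorem8:
  fixes f :: "real ^ 'n \<Rightarrow> real" and m \<beta> \<rho> :: real and xk :: "real ^ 'n"
    and g :: "nat \<Rightarrow> real ^ 'n" and tf :: "nat \<Rightarrow> real ^ 'n \<Rightarrow> real" and z :: "nat \<Rightarrow> real ^ 'n"
  assumes "m \<ge> 0" and "weakly_convex m f"
    and "0 < \<beta>" and "\<beta> < 1" and "\<rho> > 0"
    and "f xk - moreau_env f (m + \<rho>) xk > 0"
    and "prox_descent_run f m xk \<beta> \<rho> g tf z"
  shows "\<exists>T\<ge>1. \<not> pd_continue f m \<beta> xk tf z T \<and> (\<forall>i\<in>{1..<T}. pd_continue f m \<beta> xk tf z i) \<and>
           real T \<le> 8 * (Max ((\<lambda>j. norm (g j)) ` {1..T}))\<^sup>2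
                     / ((1 - \<beta>)\<^sup>2 * \<rho> * (f xk - moreau_env f (m + \<rho>) xk))"
proof -
  define h where "h x = f x + m / 2 * (norm (x - xk))\<^sup>2" for x
  define \<psi> where "\<psi> j x = tf j x + \<rho> / 2 * (norm (x - xk))\<^sup>2" for j x
  define \<phi> where "\<phi> j = \<psi> j (z (j+1))" for j
  define a where "a j = f xk - \<phi> j" for j
  define \<Delta> where "\<Delta> = f xk - moreau_env f (m + \<rho>) xk"
  define ok where "ok j = (\<forall>i\<in>{1..j}. pd_continue f m \<beta> xk tf z i)" for j
  have \<Delta>pos: "\<Delta> > 0" using assms(6) unfolding \<Delta>_def .
  note run = assms(7)[unfolded prox_descent_run_def]
  have g1: "g 1 \<in> wsubdiff m f xk" and tf1: "tf 1 = (\<lambda>x. f xk + inner (g 1) (x - xk))"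
    and pm1: "is_prox_min (tf 1) \<rho> xk (z 2)" using run by auto
  have R: "g (j+1) - m *\<^sub>R (z (j+1) - xk) \<in> wsubdiff m f (z (j+1)) \<and>
        convex_on UNIV (tf (j+1)) \<and>
        (\<forall>x. tf (j+1) x \<le> f x + m / 2 * (norm (x - xk))\<^sup>2) \<and>
        (\<forall>x. tf (j+1) x \<ge> tf j (z (j+1)) + inner (\<rho> *\<^sub>R (xk - z (j+1))) (x - z (j+1))) \<and>
        (\<forall>x. tf (j+1) x \<ge> f (z (j+1)) + m / 2 * (norm (z (j+1) - xk))\<^sup>2
                           + inner (g (j+1)) (x - z (j+1))) \<and>
        is_prox_min (tf (j+1)) \<rho> xk (z (j+2))" if "j \<ge> 1" "ok j" for j
    using run that unfolding ok_def by blast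
  have ok0: "ok 0" unfolding ok_def by auto
  have okS: "ok j" if "ok (Suc j)" for j using that unfolding ok_def by auto
  have okC: "pd_continue f m \<beta> xk tf z j" if "ok j" "j \<ge> 1" for j using that unfolding ok_def by auto

  have prox: "\<psi> j (z (j+1)) \<le> \<psi> j x" if "j \<ge> 1" "ok (j-1)" for j x
  proof (cases "j = 1")
    case True
    have e: "j + 1 = 2" using True by simp
    have "\<forall>x. tf 1 (z 2) + \<rho> / 2 * (norm (z 2 - xk))\<^sup>2 \<le> tf 1 x + \<rho> / 2 * (norm (x - xk))\<^sup>2"
      using pm1 unfolding is_prox_min_def .
    then show ?thesis unfolding \<psi>_def True one_add_one by blast
  next
    case False
    define k where "k = j - 1"
    have k: "j = k + 1" "k \<ge> 1" using that False unfolding k_def by auto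
    then have "ok k" using that by simp
    then show ?thesis using R[OF k(2)] k unfolding is_prox_min_def \<psi>_def by (auto simp: numeral_2_eq_2)
  qed
  have upper: "tf j x \<le> h x" if "j \<ge> 1" "ok (j-1)" for j x
  proof (cases "j = 1")
    case True
    have "f x \<ge> f xk + inner (g 1) (x - xk) - m / 2 * (norm (x - xk))\<^sup>2"
      using g1 unfolding wsubdiff_def by auto
    then show ?thesis using True tf1 unfolding h_def by auto
  next
    case False
    define k where "k = j - 1"
    have k: "j = k + 1" "k \<ge> 1" using that False unfolding k_def by auto
    then have "ok k" using that by simp
    then show ?thesis using R[OF k(2)] k unfolding h_def by auto
  qed
  have ii: "\<psi> (j+1) x \<ge> \<phi> j + \<rho> / 2 * (norm (x - z (j+1)))\<^sup>2" if "j \<ge> 1" "ok j" for j x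
  proof -
    have A: "tf (j+1) x \<ge> tf j (z (j+1)) + inner (\<rho> *\<^sub>R (xk - z (j+1))) (x - z (j+1))"
      using R[OF that] by blast
    have B: "(norm (x - xk))\<^sup>2 = (norm (x - z (j+1)))\<^sup>2 + 2 * inner (x - z (j+1)) (z (j+1) - xk) + (norm (z (j+1) - xk))\<^sup>2"
      by (rule nsq)
    have C: "inner (\<rho> *\<^sub>R (xk - z (j+1))) (x - z (j+1)) = - \<rho> * inner (x - z (j+1)) (z (j+1) - xk)"
      by (simp add: inner_commute inner_diff_right inner_diff_left algebra_simps)
    have D: "\<rho> / 2 * (norm (x - xk))\<^sup>2 = \<rho> / 2 * (norm (x - z (j+1)))\<^sup>2 + \<rho> * inner (x - z (j+1)) (z (j+1) - xk) + \<rho> / 2 * (norm (z (j+1) - xk))\<^sup>2"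
      unfolding B by (simp add: distrib_left)
    have E: "\<psi> (j+1) x = tf (j+1) x + \<rho> / 2 * (norm (x - xk))\<^sup>2" "\<phi> j = tf j (z (j+1)) + \<rho> / 2 * (norm (z (j+1) - xk))\<^sup>2"
      unfolding \<psi>_def \<phi>_def by simp_all
    show ?thesis using A C D E by linarith
  qed
  have iii: "\<psi> (j+1) x \<ge> h (z (j+1)) + inner (g (j+1)) (x - z (j+1)) + \<rho> / 2 * (norm (x - xk))\<^sup>2"
    if "j \<ge> 1" "ok j" for j x
    using R[OF that] unfolding \<psi>_def h_def by auto
  have phi_le: "\<phi> j \<le> moreau_env f (m + \<rho>) xk" if "j \<ge> 1" "ok (j-1)" for j
    unfolding moreau_env_def
  proof (rule cINF_greatest)
    fix y
    have "\<phi> j \<le> \<psi> j y" using prox[OF that] unfolding \<phi>_def .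
    also have "\<dots> \<le> h y + \<rho> / 2 * (norm (y - xk))\<^sup>2" using upper[OF that] unfolding \<psi>_def by auto
    also have "\<dots> = f y + (m + \<rho>) / 2 * (norm (y - xk))\<^sup>2" unfolding h_def by (simp add: algebra_simps)
    finally show "\<phi> j \<le> f y + (m + \<rho>) / 2 * (norm (y - xk))\<^sup>2" .
  qed simp
  have a_ge: "a j \<ge> \<Delta>" if "j \<ge> 1" "ok (j-1)" for j
    using phi_le[OF that] unfolding a_def \<Delta>_def by simp
  have a1: "a 1 \<le> (norm (g 1))\<^sup>2 / (2 * \<rho>)"
  proof -
    define u where "u = z 2 - xk"
    have "\<phi> 1 = f xk + inner (g 1) u + \<rho> / 2 * (norm u)\<^sup>2"
      unfolding \<phi>_def \<psi>_def tf1 u_def by (simp add: numeral_2_eq_2)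
    moreover have "inner (g 1) u \<ge> - norm (g 1) * norm u"
      using Cauchy_Schwarz_ineq2[of "g 1" u] by auto
    moreover have "\<rho> / 2 * (norm u)\<^sup>2 - norm (g 1) * norm u \<ge> - (norm (g 1))\<^sup>2 / (2 * \<rho>)"
    proof -
      have "0 \<le> (\<rho> * norm u - norm (g 1))\<^sup>2 / (2*\<rho>)" using assms by auto
      also have "\<dots> = \<rho> / 2 * (norm u)\<^sup>2 - norm (g 1) * norm u + (norm (g 1))\<^sup>2 / (2 * \<rho>)"
        using assms by (simp add: field_simps power2_eq_square)
      finally show ?thesis by linarith
    qed
    ultimately show ?thesis unfolding a_def by linarith
  qed
  have mono: "\<phi> j \<le> \<phi> (j+1)" if "j \<ge> 1" "ok j" for j
  proof -
    have X: "\<psi> (j+1) (z (j+2)) \<ge> \<phi> j + \<rho> / 2 * (norm (z (j+2) - z (j+1)))\<^sup>2" using ii[OF that] .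
    have Y: "\<phi> (j+1) = \<psi> (j+1) (z (j+2))" unfolding \<phi>_def by (simp add: numeral_2_eq_2)
    have "0 \<le> \<rho> / 2 * (norm (z (j+2) - z (j+1)))\<^sup>2" using assms(5) by simp
    then show ?thesis using X Y by linarith
  qed
  have a_le_a1: "a j \<le> a 1" if "j \<ge> 1" "ok (j-1)" for j
    using that
  proof (induction j rule: dec_induct)
    case base then show ?case by simp
  next
    case (step k)
    then have "ok k" by simp
    moreover have "ok (k-1)" using \<open>ok k\<close> \<open>1 \<le> k\<close> okS[of "k-1"] by simp
    ultimately show ?case using step mono[of k] unfolding a_def by simp
  qed
  define c where "c G = (1-\<beta>)\<^sup>2 * \<rho> / (8 * G\<^sup>2)" for G
  have step: "a (j+1) \<le> a j - c G * (a j)\<^sup>2"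
    if "j \<ge> 1" "ok j" "G > 0" "norm (g 1) \<le> G" "norm (g (j+1)) \<le> G" for j G
  proof -
    define zz where "zz = z (j+1)"
    define z' where "z' = z (j+2)"
    define d where "d = norm (zz - xk)"
    define e where "e = h zz - tf j zz"
    define w where "w = g (j+1) + \<rho> *\<^sub>R (zz - xk)"
    define t where "t = norm (z' - zz)"
    have okj1: "ok (j-1)" using that okS[of "j-1"] by simp
    have aj0: "a j \<ge> 0" using a_ge[OF that(1) okj1] \<Delta>pos by simp
    have "a j \<le> a 1" using a_le_a1[OF that(1) okj1] .
    also have "\<dots> \<le> (norm (g 1))\<^sup>2 / (2 * \<rho>)" by (rule a1)
    also have "\<dots> \<le> G\<^sup>2 / (2 * \<rho>)" using that assms(5)
      by (intro divide_right_mono power_mono) auto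
    finally have ajG: "a j \<le> G\<^sup>2 / (2 * \<rho>)" .
    have wn: "norm w \<le> norm (g (j+1)) + \<rho> * d"
      unfolding w_def d_def using norm_triangle_ineq[of "g (j+1)" "\<rho> *\<^sub>R (zz - xk)"] assms(5) by simp
    have cont: "pd_continue f m \<beta> xk tf z j" using okC that by auto
    have aj: "a j = f xk - tf j zz - \<rho> / 2 * d\<^sup>2" unfolding a_def \<phi>_def \<psi>_def zz_def d_def by simp
    have c1: "f xk - h zz < \<beta> * (f xk - tf j zz)"
      using cont unfolding pd_continue_def h_def zz_def by simp
    have c2: "(1-\<beta>)*(f xk - tf j zz) = (f xk - tf j zz) - \<beta>*(f xk - tf j zz)" by (simp add: left_diff_distrib)
    have c3: "e = h zz - tf j zz" by (simp add: e_def)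
    have "e > (1 - \<beta>) * (f xk - tf j zz)" using c1 c2 c3 by linarith
    moreover have X: "f xk - tf j zz = a j + \<rho>/2 * d\<^sup>2" using aj by simp
    ultimately have eb: "e \<ge> (1-\<beta>) * (a j + \<rho>/2 * d\<^sup>2)" by simp
    have A: "\<phi> (j+1) \<ge> \<phi> j + \<rho> / 2 * t\<^sup>2"
      using ii[OF that(1,2), of z'] unfolding \<phi>_def t_def z'_def zz_def by (simp add: add.assoc)
    have B0: "\<phi> (j+1) \<ge> h zz + inner (g (j+1)) (z' - zz) + \<rho> / 2 * (norm (z' - xk))\<^sup>2"
      using iii[OF that(1,2), of z'] unfolding \<phi>_def t_def z'_def zz_def by (simp add: add.assoc)
    have N: "(norm (z' - xk))\<^sup>2 = t\<^sup>2 + 2 * inner (z' - zz) (zz - xk) + d\<^sup>2"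
      unfolding t_def d_def by (rule nsq)
    have pj: "\<phi> j = tf j zz + \<rho> / 2 * d\<^sup>2" unfolding \<phi>_def \<psi>_def zz_def d_def by simp
    have winn: "inner w (z' - zz) = inner (g (j+1)) (z' - zz) + \<rho> * inner (z' - zz) (zz - xk)"
      unfolding w_def by (simp only: inner_add_left inner_scaleR_left inner_commute[of "zz - xk" "z' - zz"])
    have B: "\<phi> (j+1) \<ge> \<phi> j + e + inner w (z' - zz) + \<rho> / 2 * t\<^sup>2"
    proof -
      have "\<rho> / 2 * (norm (z' - xk))\<^sup>2 = \<rho> / 2 * t\<^sup>2 + \<rho> * inner (z' - zz) (zz - xk) + \<rho> / 2 * d\<^sup>2"
        unfolding N by (simp add: distrib_left)
      then show ?thesis using B0 pj winn c3 by linarith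
    qed
    have CS: "inner w (z' - zz) \<ge> - norm w * t"
      using Cauchy_Schwarz_ineq2[of w "z' - zz"] unfolding t_def by auto
    have PP: "\<phi> (j+1) - \<phi> j \<ge> l * e + \<rho>/2 * t\<^sup>2 - l * norm w * t" if "0 \<le> l" "l \<le> 1" for l
    proof -
      have "(1 - l) * \<phi> (j+1) \<ge> (1 - l) * (\<phi> j + \<rho> / 2 * t\<^sup>2)"
        using A that by (intro mult_left_mono) auto
      moreover have "l * \<phi> (j+1) \<ge> l * (\<phi> j + e - norm w * t + \<rho> / 2 * t\<^sup>2)"
        using B CS that by (intro mult_left_mono) auto
      moreover have "(1-l)*(\<phi> j + \<rho> / 2 * t\<^sup>2) = \<phi> j + \<rho> / 2 * t\<^sup>2 - l * \<phi> j - l * (\<rho> / 2 * t\<^sup>2)"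
        by (simp add: left_diff_distrib distrib_left)
      moreover have "(1-l) * \<phi> (j+1) = \<phi> (j+1) - l * \<phi> (j+1)" by (simp add: algebra_simps)
      moreover have "l * (\<phi> j + e - norm w * t + \<rho> / 2 * t\<^sup>2) = l * \<phi> j + l * e - l * norm w * t + l * (\<rho> / 2 * t\<^sup>2)"
        by (simp add: algebra_simps)
      ultimately show ?thesis by linarith
    qed
    have "\<phi> (j+1) - \<phi> j \<ge> (1-\<beta>)\<^sup>2 * \<rho> * (a j)\<^sup>2 / (8 * G\<^sup>2)"
      by (rule progress_real[OF assms(5,3,4) that(3) aj0 ajG that(5) norm_ge_zero _ wn norm_ge_zero eb _ PP])
         (auto simp: d_def t_def)
    then show ?thesis unfolding a_def c_def by simp
  qed
  have c_pos: "c G > 0" if "G > 0" for G unfolding c_def using that assms(4,5) by auto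
  have recip: "1 / a (j+1) \<ge> 1 / a j + c G"
    if "j \<ge> 1" "ok j" "G > 0" "norm (g 1) \<le> G" "norm (g (j+1)) \<le> G" for j G
  proof (rule recip_step)
    have okj1: "ok (j-1)" using that okS[of "j-1"] by simp
    show "a (j+1) > 0" using a_ge[of "j+1"] that \<Delta>pos by simp
    show "a j > 0" using a_ge[OF that(1) okj1] \<Delta>pos by simp
    show "c G \<ge> 0" using c_pos[OF that(3)] by simp
    show "a (j+1) \<le> a j - c G * (a j)\<^sup>2" by (rule step[OF that])
    have "a j \<le> a 1" using a_le_a1[OF that(1) okj1] .
    also have "\<dots> \<le> (norm (g 1))\<^sup>2 / (2 * \<rho>)" by (rule a1)
    also have "\<dots> \<le> G\<^sup>2 / (2 * \<rho>)" using that assms(5)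
      by (intro divide_right_mono power_mono) auto
    finally have "c G * a j \<le> c G * (G\<^sup>2 / (2 * \<rho>))"
      using c_pos[OF that(3)] by (intro mult_left_mono) auto
    also have "\<dots> = (1-\<beta>)\<^sup>2 / 16" unfolding c_def using that(3) assms(5) by (simp add: field_simps)
    also have "\<dots> < 1"
    proof -
      have "(1-\<beta>)\<^sup>2 \<le> 1" using assms(3,4) by (simp add: power_le_one)
      then show ?thesis by simp
    qed
    finally show "c G * a j < 1" .
  qed
  have sum: "ok N \<longrightarrow> (\<forall>j\<in>{1..N}. norm (g (j+1)) \<le> G) \<longrightarrow> 1 / a (N+1) \<ge> 1 / a 1 + real N * c G"
    if "G > 0" "norm (g 1) \<le> G" for N G
  proof (induction N)
    case 0 then show ?case by simp
  next
    case (Suc N)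
    show ?case
    proof (intro impI)
      assume h1: "ok (Suc N)" and h2: "\<forall>j\<in>{1..Suc N}. norm (g (j+1)) \<le> G"
      have "1 / a (N+1) \<ge> 1 / a 1 + real N * c G" using Suc.IH okS[OF h1] h2 by auto
      moreover have "1 / a (N+1+1) \<ge> 1 / a (N+1) + c G"
        by (rule recip) (use h1 h2 that in auto)
      ultimately show "1 / a (Suc N + 1) \<ge> 1 / a 1 + real (Suc N) * c G"
        by (simp add: algebra_simps)
    qed
  qed
  have a1pos: "a 1 > 0" using a_ge[of 1] ok0 \<Delta>pos by simp
  have g1pos: "norm (g 1) > 0"
  proof -
    have "0 < (norm (g 1))\<^sup>2 / (2 * \<rho>)" using a1pos a1 by linarith
    then show ?thesis using assms(5) by (auto simp: zero_less_divide_iff)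
  qed
  have termin: "\<exists>j\<ge>1. \<not> pd_continue f m \<beta> xk tf z j"
  proof (rule ccontr)
    assume "\<not> ?thesis"
    then have okall: "ok j" for j unfolding ok_def by auto
    define Rr where "Rr = norm (g 1) / \<rho>"
    have dbound: "norm (z (j+1) - xk) \<le> Rr" if "j \<ge> 1" for j
    proof -
      have X: "\<psi> (j+1) xk \<ge> \<phi> j + \<rho> / 2 * (norm (xk - z (j+1)))\<^sup>2" using ii[OF that okall] .
      have Y: "\<psi> (j+1) xk \<le> f xk" using upper[of "j+1" xk] okall unfolding \<psi>_def h_def by simp
      have nc: "norm (xk - z (j+1)) = norm (z (j+1) - xk)" by (rule norm_minus_commute)
      have "\<rho> / 2 * (norm (z (j+1) - xk))\<^sup>2 \<le> a j" using X Y nc unfolding a_def by simp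
      also have "a j \<le> a 1" using a_le_a1[OF that] okall by simp
      also have "\<dots> \<le> (norm (g 1))\<^sup>2 / (2 * \<rho>)" by (rule a1)
      finally have "\<rho> / 2 * (norm (z (j+1) - xk))\<^sup>2 \<le> (norm (g 1))\<^sup>2 / (2 * \<rho>)" .
      then have "(\<rho> * norm (z (j+1) - xk))\<^sup>2 \<le> (norm (g 1))\<^sup>2"
        using assms(5) by (simp add: field_simps power2_eq_square)
      then have "\<rho> * norm (z (j+1) - xk) \<le> norm (g 1)"
        by (rule power2_le_imp_le) simp
      then show ?thesis unfolding Rr_def using assms(5) by (simp add: field_simps)
    qed
    have Fc: "continuous_on UNIV (\<lambda>x. f x + m / 2 * (norm x)\<^sup>2)"
      using assms(2) convex_on_continuous[OF open_UNIV] unfolding weakly_convex_def by auto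
    have heq: "h = (\<lambda>x. (f x + m / 2 * (norm x)\<^sup>2) - m / 2 * (norm x)\<^sup>2 + m / 2 * (norm (x - xk))\<^sup>2)"
      by (auto simp: h_def fun_eq_iff)
    have hc: "continuous_on UNIV h" unfolding heq by (intro continuous_intros Fc)
    have "compact (h ` cball xk (Rr+1))"
      by (rule compact_continuous_image[OF continuous_on_subset[OF hc] compact_cball]) auto
    then obtain M0 where M0: "\<forall>y\<in>h ` cball xk (Rr+1). norm y \<le> M0"
      using compact_imp_bounded bounded_iff by metis
    have M: "h y \<le> M0" if "y \<in> cball xk (Rr+1)" for y
    proof -
      have "norm (h y) \<le> M0" using M0 that by blast
      then show ?thesis by (metis abs_le_D1 real_norm_def)
    qed
    define B where "B = max (norm (g 1)) (M0 - f xk + norm (g 1) * Rr)"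
    have gb: "norm (g (j+1)) \<le> B" if "j \<ge> 1" for j
    proof (cases "g (j+1) = 0")
      case True then show ?thesis unfolding B_def by (simp add: le_max_iff_disj)
    next
      case False
      define zz where "zz = z (j+1)"
      define gg where "gg = g (j+1)"
      define y where "y = zz + (1 / norm gg) *\<^sub>R gg"
      have ng: "norm gg > 0" using False unfolding gg_def by simp
      have Ri: "tf (j+1) y \<le> f y + m / 2 * (norm (y - xk))\<^sup>2"
        and Riii: "tf (j+1) y \<ge> f zz + m / 2 * (norm (zz - xk))\<^sup>2 + inner gg (y - zz)"
        using R[OF that okall] unfolding zz_def gg_def by blast+
      have sub: "h y \<ge> h zz + inner gg (y - zz)" using Ri Riii unfolding h_def by linarith
      have "inner gg (y - zz) = (1 / norm gg) * inner gg gg" unfolding y_def by simp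
      also have "\<dots> = norm gg" using ng by (simp add: power2_norm_eq_inner[symmetric] power2_eq_square)
      finally have inn: "inner gg (y - zz) = norm gg" .
      have "norm (y - xk) \<le> norm (zz - xk) + norm ((1 / norm gg) *\<^sub>R gg)"
        unfolding y_def by (metis add.commute add_diff_eq norm_triangle_ineq diff_add_eq)
      also have "\<dots> \<le> Rr + 1" using dbound[OF that] ng unfolding zz_def by simp
      finally have "y \<in> cball xk (Rr+1)" by (simp add: dist_norm norm_minus_commute)
      then have hy: "h y \<le> M0" by (rule M)
      have "h zz \<ge> tf 1 zz" using upper[of 1 zz] ok0 by simp
      moreover have "tf 1 zz = f xk + inner (g 1) (zz - xk)" using tf1 by simp
      moreover have "inner (g 1) (zz - xk) \<ge> - (norm (g 1) * norm (zz - xk))"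
        using Cauchy_Schwarz_ineq2[of "g 1" "zz - xk"] by auto
      moreover have "norm (g 1) * norm (zz - xk) \<le> norm (g 1) * Rr"
        using dbound[OF that] unfolding zz_def by (intro mult_left_mono) auto
      ultimately have "h zz \<ge> f xk - norm (g 1) * Rr" by linarith
      then have "norm gg \<le> M0 - f xk + norm (g 1) * Rr" using sub inn hy by linarith
      then show ?thesis unfolding B_def gg_def by simp
    qed
    have Bg1: "norm (g 1) \<le> B" unfolding B_def by simp
    have B0: "B > 0" using Bg1 g1pos by linarith
    have cB: "c B > 0" by (rule c_pos[OF B0])
    obtain N :: nat where N: "1 / (\<Delta> * c B) < real N" using reals_Archimedean2 by blast
    have "1 / a (N+1) \<ge> 1 / a 1 + real N * c B"
      using sum[OF B0 Bg1, of N] okall gb by auto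
    moreover have "1 / a (N+1) \<le> 1 / \<Delta>"
      using a_ge[of "N+1"] okall \<Delta>pos by (simp add: frac_le)
    moreover have "1 / a 1 > 0" using a1pos by simp
    ultimately have "real N * c B < 1 / \<Delta>" by linarith
    moreover have "1 / \<Delta> < real N * c B"
    proof -
      have "1 / (\<Delta> * c B) * c B < real N * c B" using N cB by (intro mult_strict_right_mono) auto
      then show ?thesis using cB by (simp add: field_simps)
    qed
    ultimately show False by linarith
  qed
  define P where "P j = (1 \<le> j \<and> \<not> pd_continue f m \<beta> xk tf z j)" for j
  define T where "T = (LEAST j. P j)"
  have PT: "P T" unfolding T_def using termin LeastI_ex[of P] unfolding P_def by blast
  have before: "\<forall>i\<in>{1..<T}. pd_continue f m \<beta> xk tf z i"
  proof
    fix i assume "i \<in> {1..<T}"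
    then have "\<not> P i" using not_less_Least[of i P] unfolding T_def by auto
    then show "pd_continue f m \<beta> xk tf z i" using \<open>i \<in> {1..<T}\<close> unfolding P_def by auto
  qed
  have T1: "T \<ge> 1" using PT unfolding P_def by simp
  have okT: "ok (T-1)" using before unfolding ok_def by auto
  define G where "G = Max ((\<lambda>j. norm (g j)) ` {1..T})"
  have Gge: "norm (g j) \<le> G" if "j \<in> {1..T}" for j unfolding G_def
    by (rule Max_ge) (use that in auto)
  have Gg1: "norm (g 1) \<le> G" using Gge T1 by auto
  have G0: "G > 0" using Gg1 g1pos by linarith
  have "1 / a (T-1+1) \<ge> 1 / a 1 + real (T-1) * c G"
    using sum[OF G0 Gg1, of "T-1"] okT Gge T1 by auto
  then have s1: "1 / a T \<ge> 1 / a 1 + real (T-1) * c G" using T1 by simp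
  have s2: "1 / a T \<le> 1 / \<Delta>" using a_ge[OF T1 okT] \<Delta>pos by (simp add: frac_le)
  have "a 1 \<le> G\<^sup>2 / (2 * \<rho>)"
  proof -
    have "a 1 \<le> (norm (g 1))\<^sup>2 / (2 * \<rho>)" by (rule a1)
    also have "\<dots> \<le> G\<^sup>2 / (2 * \<rho>)" using Gg1 assms(5)
      by (intro divide_right_mono power_mono) auto
    finally show ?thesis .
  qed
  then have s3: "1 / a 1 \<ge> 2 * \<rho> / G\<^sup>2"
    using a1pos G0 assms(5) by (simp add: field_simps)
  have "(real T - 1) * ((1-\<beta>)\<^sup>2 * \<rho> / (8 * G\<^sup>2)) \<le> 1 / \<Delta> - 2 * \<rho> / G\<^sup>2"
    using s1 s2 s3 T1 unfolding c_def by (simp add: of_nat_diff)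
  then have fin: "real T \<le> 8 * G\<^sup>2 / ((1-\<beta>)\<^sup>2 * \<rho> * \<Delta>)"
    by (rule final_real[OF assms(3,4,5) G0 \<Delta>pos])
  show ?thesis
    using T1 PT before fin unfolding P_def G_def \<Delta>_def by blast
qed
end
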